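(* Let $(\mathcal{Z},d_\mathcal{Z})$ be a metric space and $\mathcal{F}$ a class of functions $f:\mathcal{Z}\to\mathbb{R}$. The following are equivalent: (i) for every $f\in\mathcal{F}$ and every $z\in\mathcal{Z}$ there exists a constant $\lambda$ such that $f(z')-f(z)\le\lambda\, d_\mathcal{Z}(z,z')$ for all $z'\in\mathcal{Z}$; (ii) for every $f\in\mathcal{F}$ and every empirical distribution $P_n$ on $\mathcal{Z}$, the set $\{\lambda:\psi_{f,P_n}(\lambda)=0\}$ is nonempty, where $\psi_{f,P_n}(\lambda):=\mathbb{E}_{z\sim P_n}\big(\sup_{z'\in\mathcal{Z}}\{f(z')-\lambda d_\mathcal{Z}(z,z')-f(z)\}\big)$.
   Context: An empirical distribution $P_n$ is the uniform distribution on finitely many points $z_1,\dots,z_n\in\mathcal{Z}$. *)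

theory Defs
  imports "HOL-Analysis.Analysis"
begin

text \<open>An empirical distribution P_n is represented by the nonempty list of its
  (not necessarily distinct) atoms z_1, ..., z_n; expectation under P_n is the
  average over the list. The supremum may be +infinity, so values live in ereal.\<close>

definition empirical_expectation :: "'z list \<Rightarrow> ('z \<Rightarrow> ereal) \<Rightarrow> ereal" where
  "empirical_expectation zs g = (\<Sum>z\<leftarrow>zs. g z) / ereal (real (length zs))"

definition psi :: "('z::metric_space \<Rightarrow> real) \<Rightarrow> 'z list \<Rightarrow> real \<Rightarrow> ereal" where
  "psi f zs lam = empirical_expectation zs
      (\<lambda>z. SUP z'\<in>UNIV. ereal (f z' - lam * dist z z' - f z))"

end

theory Submission
  imports Defs
begin

lemma sup_nonneg:
  fixes f :: "'z::metric_space \<Rightarrow> real"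
  shows "0 \<le> (SUP z'\<in>UNIV. ereal (f z' - lam * dist z z' - f z))"
proof -
  have "ereal (f z - lam * dist z z - f z) \<le> (SUP z'\<in>UNIV. ereal (f z' - lam * dist z z' - f z))"
    by (rule SUP_upper) auto
  then show ?thesis by (simp add: zero_ereal_def)
qed

lemma sup_zero_iff:
  fixes f :: "'z::metric_space \<Rightarrow> real"
  shows "(SUP z'\<in>UNIV. ereal (f z' - lam * dist z z' - f z)) = 0 \<longleftrightarrow>
         (\<forall>z'. f z' - f z \<le> lam * dist z z')"
proof -
  have "(SUP z'\<in>UNIV. ereal (f z' - lam * dist z z' - f z)) = 0 \<longleftrightarrow>
        (SUP z'\<in>UNIV. ereal (f z' - lam * dist z z' - f z)) \<le> 0"
    using sup_nonneg[of f lam z] by auto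
  also have "\<dots> \<longleftrightarrow> (\<forall>z'. f z' - f z \<le> lam * dist z z')"
    by (simp add: SUP_le_iff zero_ereal_def algebra_simps)
  finally show ?thesis .
qed

lemma ereal_add_nonneg_zero:
  fixes a b :: ereal
  assumes "0 \<le> a" "0 \<le> b"
  shows "a + b = 0 \<longleftrightarrow> a = 0 \<and> b = 0"
  using assms by (cases a; cases b) auto

lemma sum_list_nonneg_zero:
  fixes g :: "'a \<Rightarrow> ereal"
  assumes "\<And>x. 0 \<le> g x"
  shows "(\<Sum>z\<leftarrow>zs. g z) = 0 \<longleftrightarrow> (\<forall>z\<in>set zs. g z = 0)"
proof (induction zs)
  case Nil then show ?case by simp
next
  case (Cons a zs)
  have "0 \<le> (\<Sum>z\<leftarrow>zs. g z)" using assms by (induction zs) (auto intro: add_nonneg_nonneg)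
  then show ?case using Cons assms ereal_add_nonneg_zero[of "g a" "(\<Sum>z\<leftarrow>zs. g z)"] by auto
qed

lemma div_zero_iff:
  fixes x :: ereal
  assumes "n > 0"
  shows "x / ereal (real n) = 0 \<longleftrightarrow> x = 0"
  using assms by (cases x) (auto simp: divide_ereal_def)

lemma psi_zero_iff:
  fixes f :: "'z::metric_space \<Rightarrow> real"
  assumes "zs \<noteq> []"
  shows "psi f zs lam = 0 \<longleftrightarrow> (\<forall>z\<in>set zs. \<forall>z'. f z' - f z \<le> lam * dist z z')"
proof -
  have "psi f zs lam = 0 \<longleftrightarrow>
    (\<Sum>z\<leftarrow>zs. SUP z'\<in>UNIV. ereal (f z' - lam * dist z z' - f z)) = 0"
    using assms by (simp add: psi_def empirical_expectation_def div_zero_iff)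
  also have "\<dots> \<longleftrightarrow> (\<forall>z\<in>set zs. (SUP z'\<in>UNIV. ereal (f z' - lam * dist z z' - f z)) = 0)"
    by (rule sum_list_nonneg_zero) (rule sup_nonneg)
  also have "\<dots> \<longleftrightarrow> (\<forall>z\<in>set zs. \<forall>z'. f z' - f z \<le> lam * dist z z')"
    by (simp add: sup_zero_iff)
  finally show ?thesis .
qed

theorem lemma3:
  fixes F :: "('z::metric_space \<Rightarrow> real) set"
  shows "(\<forall>f\<in>F. \<forall>z. \<exists>lam::real. \<forall>z'. f z' - f z \<le> lam * dist z z')
     \<longleftrightarrow> (\<forall>f\<in>F. \<forall>zs::'z list. zs \<noteq> [] \<longrightarrow> {lam::real. psi f zs lam = 0} \<noteq> {})"
proof
  assume H: "\<forall>f\<in>F. \<forall>z. \<exists>lam::real. \<forall>z'. f z' - f z \<le> lam * dist z z'"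
  show "\<forall>f\<in>F. \<forall>zs::'z list. zs \<noteq> [] \<longrightarrow> {lam::real. psi f zs lam = 0} \<noteq> {}"
  proof (intro ballI allI impI)
    fix f zs assume f: "f \<in> F" and zs: "(zs::'z list) \<noteq> []"
    obtain L where L: "\<And>z z'. f z' - f z \<le> L z * dist z z'"
      using H f by metis
    define lam where "lam = Max (L ` set zs)"
    have "\<forall>z\<in>set zs. \<forall>z'. f z' - f z \<le> lam * dist z z'"
    proof (intro ballI allI)
      fix z z' assume z: "z \<in> set zs"
      have "L z \<le> lam" unfolding lam_def using z by simp
      then have "L z * dist z z' \<le> lam * dist z z'" by (simp add: mult_right_mono)
      then show "f z' - f z \<le> lam * dist z z'" using L[of z' z] by linarith
    qed
    then have "psi f zs lam = 0" using psi_zero_iff[OF zs] by simp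
    then show "{lam::real. psi f zs lam = 0} \<noteq> {}" by blast
  qed
next
  assume H: "\<forall>f\<in>F. \<forall>zs::'z list. zs \<noteq> [] \<longrightarrow> {lam::real. psi f zs lam = 0} \<noteq> {}"
  show "\<forall>f\<in>F. \<forall>z. \<exists>lam::real. \<forall>z'. f z' - f z \<le> lam * dist z z'"
  proof (intro ballI allI)
    fix f z assume "f \<in> F"
    then obtain lam where "psi f [z] lam = 0" using H by blast
    then show "\<exists>lam::real. \<forall>z'. f z' - f z \<le> lam * dist z z'"
      using psi_zero_iff[of "[z]" f lam] by auto
  qed
qed

end
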